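(* For all integers $n\ge 2$ and $0\le k\le n-2$, the number of Dyck $n$-paths containing exactly $k$ long interior inclines equals \[\frac{2}{n+1}\binom{n+1}{k+2}\binom{n-2}{k}.\] Consequently $C_n=\frac{2}{n+1}\sum_{k=0}^{n-2}\binom{n+1}{k+2}\binom{n-2}{k}$, where $C_n$ is the $n$th Catalan number.
   Context: A Dyck $n$-path is a lattice path from $(0,0)$ to $(2n,0)$ consisting of $n$ upsteps $U=(1,1)$ and $n$ downsteps $D=(1,-1)$ that never goes below the $x$-axis. An ascent is a maximal run of consecutive upsteps and a descent is a maximal run of consecutive downsteps; an incline is an ascent or a descent. An incline is long if it consists of at least two steps. In a nonempty Dyck path the first ascent (initial ascent) and the last descent (terminal descent) are not interior; all other inclines are interior. *)

theory Defs
  imports Complex_Main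
begin

text \<open>A path is a list of steps: True = upstep U, False = downstep D.\<close>

definition height :: "bool list \<Rightarrow> int" where
  "height w = int (length (filter id w)) - int (length (filter Not w))"

definition dyck :: "nat \<Rightarrow> bool list \<Rightarrow> bool" where
  "dyck n w \<longleftrightarrow> length (filter id w) = n \<and> length (filter Not w) = n \<and>
     (\<forall>i \<le> length w. height (take i w) \<ge> 0)"

text \<open>Maximal runs of equal consecutive steps (inclines), as (step, length).\<close>
fun runs :: "bool list \<Rightarrow> (bool \<times> nat) list" where
  "runs [] = []"
| "runs (x # xs) = (case runs xs of
      [] \<Rightarrow> [(x, 1)]
    | (y, m) # r \<Rightarrow> (if x = y then (y, Suc m) # r else (x, 1) # (y, m) # r))"

definition interior_inclines :: "bool list \<Rightarrow> (bool \<times> nat) list" where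
  "interior_inclines w = butlast (tl (runs w))"

definition long_interior_count :: "bool list \<Rightarrow> nat" where
  "long_interior_count w = length (filter (\<lambda>(b, m). m \<ge> 2) (interior_inclines w))"

definition catalan :: "nat \<Rightarrow> nat" where
  "catalan n = ((2 * n) choose n) div (n + 1)"

end

theory Submission
  imports Defs
begin


fun ok :: "nat \<Rightarrow> bool list \<Rightarrow> bool" where
  "ok h [] = (h = 0)"
| "ok h (x # xs) = (if x then ok (Suc h) xs else (h \<noteq> 0 \<and> ok (h - 1) xs))"

fun pat3 :: "bool \<Rightarrow> bool \<Rightarrow> bool list \<Rightarrow> nat" where
  "pat3 a b [] = 0"
| "pat3 a b (x # xs) = (if \<not> a \<and> x then 1 else 0) + pat3 b x xs"

lemma ok_len: "ok h w \<Longrightarrow> length w = 2 * length (filter id w) + h"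
  by (induction w arbitrary: h) (auto split: if_splits)

lemma all_le_Suc: "(\<forall>i\<le>Suc n. P i) = (P 0 \<and> (\<forall>i\<le>n. P (Suc i)))"
  by (metis Suc_le_mono le0 not0_implies_Suc)

lemma height_Nil: "height [] = 0" by (simp add: height_def)
lemma height_Cons: "height (x # xs) = height xs + (if x then 1 else -1)"
  by (simp add: height_def)

lemma ok_iff: "ok h w = (int h + height w = 0 \<and> (\<forall>i\<le>length w. int h + height (take i w) \<ge> 0))"
proof (induction w arbitrary: h)
  case Nil thus ?case by (simp add: height_Nil)
next
  case (Cons x xs)
  show ?case
  proof (cases x)
    case True
    thus ?thesis using Cons.IH[of "Suc h"]
      by (simp add: all_le_Suc height_Cons height_Nil algebra_simps)
  next
    case False
    show ?thesis
    proof (cases h)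
      case 0
      have "\<not> (int h + height (take 1 (x # xs)) \<ge> 0)" using False 0 by (simp add: height_Cons height_Nil)
      moreover have "1 \<le> length (x # xs)" by simp
      ultimately show ?thesis using False 0 by auto
    next
      case (Suc h')
      thus ?thesis using Cons.IH[of h'] False
        by (simp add: all_le_Suc height_Cons height_Nil algebra_simps)
    qed
  qed
qed

lemma dyck_iff: "dyck n w = (ok 0 w \<and> length (filter id w) = n)"
  unfolding dyck_def ok_iff height_def by auto

fun pc :: "bool list \<Rightarrow> nat" where
  "pc (a # b # c # r) = (if a \<noteq> b \<and> b = c then 1 else 0) + pc (b # c # r)"
| "pc _ = 0"

fun eFF :: "bool list \<Rightarrow> bool" where
  "eFF (a # b # c # r) = eFF (b # c # r)"
| "eFF [a, b] = (\<not> a \<and> \<not> b)"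
| "eFF _ = False"

definition longc :: "(bool \<times> nat) list \<Rightarrow> nat" where
  "longc R = length (filter (\<lambda>(b, m). m \<ge> 2) R)"

lemma runs_hd: "xs \<noteq> [] \<Longrightarrow> runs xs \<noteq> [] \<and> fst (hd (runs xs)) = hd xs \<and> snd (hd (runs xs)) \<ge> 1
   \<and> (snd (hd (runs xs)) \<ge> 2 \<longleftrightarrow> (length xs \<ge> 2 \<and> xs ! 1 = xs ! 0))"
proof (induction xs)
  case Nil thus ?case by simp
next
  case (Cons x xs)
  show ?case
  proof (cases xs)
    case Nil thus ?thesis by simp
  next
    case (Cons y ys)
    then obtain m r where R: "runs xs = (y, m) # r" and m: "m \<ge> 1"
      using Cons.IH by (cases "runs xs") auto
    show ?thesis using R m Cons by auto
  qed
qed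

lemma pc_Cons: "pc (x # xs) = (if length xs \<ge> 2 \<and> x \<noteq> xs ! 0 \<and> xs ! 0 = xs ! 1 then 1 else 0) + pc xs"
  by (cases xs rule: pc.cases) auto

lemma longc_Cons: "longc (p # R) = (if snd p \<ge> 2 then 1 else 0) + longc R"
  by (cases p) (simp add: longc_def)

lemma runs_tl: "xs \<noteq> [] \<Longrightarrow> longc (tl (runs xs)) = pc xs"
proof (induction xs)
  case Nil thus ?case by simp
next
  case (Cons x xs)
  show ?case
  proof (cases "xs = []")
    case True thus ?thesis by (simp add: longc_def)
  next
    case False
    define y where "y = hd xs"
    define m where "m = snd (hd (runs xs))"
    define r where "r = tl (runs xs)"
    have H: "runs xs \<noteq> [] \<and> fst (hd (runs xs)) = hd xs \<and> snd (hd (runs xs)) \<ge> 1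
       \<and> (snd (hd (runs xs)) \<ge> 2 \<longleftrightarrow> (length xs \<ge> 2 \<and> xs ! 1 = xs ! 0))"
      by (rule runs_hd[OF False])
    have R: "runs xs = (y, m) # r" unfolding y_def m_def r_def using H
      by (cases "runs xs") auto
    have m: "m \<ge> 1" and mm: "m \<ge> 2 \<longleftrightarrow> (length xs \<ge> 2 \<and> xs ! 1 = xs ! 0)"
      using H unfolding m_def by auto
    have xs: "xs = y # tl xs" using False unfolding y_def by simp
    have IH: "longc r = pc xs" using Cons.IH False R by simp
    show ?thesis
    proof (cases "x = y")
      case True
      have "runs (x # xs) = (y, Suc m) # r" using R True by simp
      hence "longc (tl (runs (x # xs))) = pc xs" using IH by simp
      have "pc (x # xs) = pc xs"
      proof -
        have "pc (x # y # tl xs) = pc (y # tl xs)" using True by (cases "tl xs") auto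
        thus ?thesis using xs by metis
      qed
      thus ?thesis using \<open>longc (tl (runs (x # xs))) = pc xs\<close> by simp
    next
      case False
      have "runs (x # xs) = (x, 1) # (y, m) # r" using R False by simp
      hence "longc (tl (runs (x # xs))) = (if m \<ge> 2 then 1 else 0) + pc xs"
        using IH by (simp add: longc_Cons)
      moreover have "pc (x # xs) = (if m \<ge> 2 then 1 else 0) + pc xs"
      proof -
        have "xs ! 0 = y" using xs by (metis nth_Cons_0)
        thus ?thesis using mm False by (subst pc_Cons) simp
      qed
      ultimately show ?thesis by simp
    qed
  qed
qed

lemma runs_single: "runs xs = [(y, m)] \<Longrightarrow> \<forall>z\<in>set xs. z = y"
proof (induction xs arbitrary: y m)
  case Nil thus ?case by simp
next
  case (Cons x xs)
  show ?case
  proof (cases "runs xs")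
    case Nil
    hence "xs = []" using runs_hd[of xs] by auto
    thus ?thesis using Cons.prems by simp
  next
    case (Cons p r)
    obtain y' m' where p: "p = (y', m')" by (cases p)
    show ?thesis
    proof (cases "x = y'")
      case True
      hence "runs (x # xs) = (y', Suc m') # r" using Cons p by simp
      hence "r = []" "y = y'" "x = y'" using Cons.prems True by auto
      thus ?thesis using Cons.IH[of y' m'] Cons p by auto
    next
      case False
      hence "runs (x # xs) = (x, 1) # (y', m') # r" using Cons p by simp
      thus ?thesis using Cons.prems by simp
    qed
  qed
qed

lemma runs_last: "xs \<noteq> [] \<Longrightarrow> snd (last (runs xs)) \<ge> 1 \<and>
   (snd (last (runs xs)) \<ge> 2 \<longleftrightarrow> (length xs \<ge> 2 \<and> xs ! (length xs - 2) = last xs))"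
proof (induction xs)
  case Nil thus ?case by simp
next
  case (Cons x xs)
  show ?case
  proof (cases "xs = []")
    case True thus ?thesis by simp
  next
    case False
    define y where "y = hd xs"
    define m where "m = snd (hd (runs xs))"
    define r where "r = tl (runs xs)"
    have H: "runs xs \<noteq> [] \<and> fst (hd (runs xs)) = hd xs \<and> snd (hd (runs xs)) \<ge> 1
       \<and> (snd (hd (runs xs)) \<ge> 2 \<longleftrightarrow> (length xs \<ge> 2 \<and> xs ! 1 = xs ! 0))"
      by (rule runs_hd[OF False])
    have R: "runs xs = (y, m) # r" unfolding y_def m_def r_def using H
      by (cases "runs xs") auto
    have IH: "snd (last (runs xs)) \<ge> 1 \<and>
      (snd (last (runs xs)) \<ge> 2 \<longleftrightarrow> (length xs \<ge> 2 \<and> xs ! (length xs - 2) = last xs))"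
      using Cons.IH False by simp
    have lastx: "last (x # xs) = last xs" using False by simp
    have nthx: "(x # xs) ! (length (x # xs) - 2) = xs ! (length xs - 2)" if "length xs \<ge> 2"
    proof -
      have "length (x # xs) - 2 = Suc (length xs - 2)" using that by simp
      thus ?thesis by simp
    qed
    show ?thesis
    proof (cases "r = []")
      case True
      have all: "\<forall>z\<in>set xs. z = y" using runs_single[of xs y m] R True by simp
      have lxy: "last xs = y" using all False by simp
      show ?thesis
      proof (cases "x = y")
        case True
        have "runs (x # xs) = [(y, Suc m)]" using R \<open>r = []\<close> True by simp
        moreover have "(x # xs) ! (length (x # xs) - 2) = y"
        proof -
          have "(x # xs) ! (length (x # xs) - 2) \<in> set (x # xs)" by (rule nth_mem) simp
          thus ?thesis using all True by auto
        qed
        moreover have "m \<ge> 1" using H m_def by simp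
        moreover have "length xs \<ge> 1" using False by (cases xs) auto
        ultimately show ?thesis using lastx lxy by simp
      next
        case xy: False
        have "runs (x # xs) = [(x, 1), (y, m)]" using R \<open>r = []\<close> xy by simp
        moreover have "m \<ge> 1" using H m_def by simp
        moreover have "m \<ge> 2 \<longleftrightarrow> (length xs \<ge> 2 \<and> xs ! (length xs - 2) = last xs)"
          using IH R True by simp
        moreover have "length xs = 1 \<Longrightarrow> (x # xs) ! (length (x # xs) - 2) = x" by simp
        ultimately show ?thesis using lastx lxy nthx xy False
          by (cases "length xs \<ge> 2") (auto simp: le_Suc_eq Suc_le_eq)
      qed
    next
      case False
      have len: "length xs \<ge> 2"
      proof (rule ccontr)
        assume "\<not> length xs \<ge> 2"
        moreover have "length xs \<noteq> 0" using \<open>xs \<noteq> []\<close> by simp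
        ultimately have "length xs = 1" by linarith
        then obtain z where "xs = [z]" by (auto simp: length_Suc_conv)
        thus False using R False by simp
      qed
      have "last (runs (x # xs)) = last (runs xs)"
        using R False by (cases "x = y") auto
      thus ?thesis using IH lastx nthx[OF len] len by simp
    qed
  qed
qed

lemma longc_butlast: "R \<noteq> [] \<Longrightarrow> longc R = longc (butlast R) + (if snd (last R) \<ge> 2 then 1 else 0)"
proof -
  assume "R \<noteq> []"
  hence "R = butlast R @ [last R]" by simp
  hence "longc R = longc (butlast R @ [last R])" by simp
  also have "\<dots> = longc (butlast R) + (if snd (last R) \<ge> 2 then 1 else 0)"
    by (cases "last R") (simp add: longc_def)
  finally show ?thesis .
qed

lemma eFF_iff: "eFF xs = (length xs \<ge> 2 \<and> \<not> xs ! (length xs - 2) \<and> \<not> last xs)"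
  by (induction xs rule: eFF.induct) (auto simp: nth_Cons')

lemma pat_TT3: "pat3 True True (x # y # z # r) = (if \<not> x \<and> z then 1 else 0) + pat3 True True (y # z # r)"
  by simp

lemma pc_pat: "pc xs + (if length xs \<ge> 2 \<and> \<not> xs ! 0 \<and> \<not> xs ! 1 then 1 else 0)
     = pat3 True True xs + (if eFF xs then 1 else 0)"
proof (induction xs rule: pc.induct)
  case (1 a b c r)
  have e: "eFF (a # b # c # r) = eFF (b # c # r)" by simp
  show ?case using 1 unfolding pat_TT3 e by (cases a; cases b; cases c) auto
qed auto

lemma ok_last: "ok h w \<Longrightarrow> w \<noteq> [] \<Longrightarrow> \<not> last w"
proof (induction w arbitrary: h)
  case Nil thus ?case by simp
next
  case (Cons x xs)
  show ?case
  proof (cases xs)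
    case Nil thus ?thesis using Cons.prems by (cases x) auto
  next
    case (Cons y ys)
    thus ?thesis using Cons.IH Cons.prems by (cases x) auto
  qed
qed

lemma lic: assumes "ok 0 w" "w \<noteq> []"
  shows "long_interior_count w = pat3 True True w"
proof -
  have hd: "hd w" using assms by (cases w) (auto split: if_splits)
  have lst: "\<not> last w" using ok_last assms by blast
  define R where "R = runs w"
  have Rne: "R \<noteq> []" using runs_hd[OF assms(2)] R_def by simp
  have "length R \<noteq> 1"
  proof
    assume "length R = 1"
    then obtain p where "R = [p]" by (cases R) (auto simp: length_Suc_conv)
    then obtain y m where "runs w = [(y, m)]" using R_def by (cases p) auto
    hence "\<forall>z\<in>set w. z = y" by (rule runs_single)
    hence "hd w = y" "last w = y" using assms(2) by auto
    thus False using hd lst by simp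
  qed
  hence tlne: "tl R \<noteq> []" using Rne by (cases R) auto
  have lt: "last (tl R) = last R" using tlne by (cases R) auto
  have A: "longc (tl R) = longc (butlast (tl R)) + (if snd (last R) \<ge> 2 then 1 else 0)"
    using longc_butlast[OF tlne] lt by simp
  have B: "(snd (last R) \<ge> 2) = eFF w"
    using runs_last[OF assms(2)] lst unfolding eFF_iff R_def by auto
  have C: "pc w = longc (tl R)" using runs_tl[OF assms(2)] R_def by simp
  have D: "pc w = pat3 True True w + (if eFF w then 1 else 0)"
    using pc_pat[of w] hd assms(2) by (cases w) auto
  have "long_interior_count w = longc (butlast (tl R))"
    unfolding long_interior_count_def interior_inclines_def longc_def R_def by simp
  thus ?thesis using A B C D by simp
qed

definition bi :: "int \<Rightarrow> int \<Rightarrow> int" where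
  "bi n k = (if 0 \<le> k then int (nat n choose nat k) else 0)"

lemma bi_neg: "k < 0 \<Longrightarrow> bi n k = 0"
  by (simp add: bi_def)

lemma bi_pascal: "0 \<le> n \<Longrightarrow> bi (n + 1) k = bi n (k - 1) + bi n k"
proof -
  assume n: "0 \<le> n"
  consider "k < 0" | "k = 0" | "k > 0" by linarith
  thus ?thesis
  proof cases
    case 1 thus ?thesis by (simp add: bi_def)
  next
    case 2 thus ?thesis by (simp add: bi_def)
  next
    case 3
    have a: "nat (n + 1) = Suc (nat n)" using n by simp
    have b: "nat k = Suc (nat (k - 1))" using 3 by simp
    show ?thesis using 3 unfolding bi_def a b by simp
  qed
qed

definition FFf :: "int \<Rightarrow> int \<Rightarrow> int \<Rightarrow> int" where
  "FFf h m k = bi (m - 1) (k - 1) * bi (m + h) k - bi (m - 1) k * bi (m + h) (k - 1)"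
definition TFf :: "int \<Rightarrow> int \<Rightarrow> int \<Rightarrow> int" where
  "TFf h m k = bi m k * bi (m + h - 1) k - bi m (k + 1) * bi (m + h - 1) (k - 1)"
definition TTf :: "int \<Rightarrow> int \<Rightarrow> int \<Rightarrow> int" where
  "TTf h m k = bi (m + 1) (k + 1) * bi (m + h - 2) k - bi (m + 1) (k + 2) * bi (m + h - 2) (k - 1)"

lemma I1: assumes "h \<ge> 1" "m \<ge> 1"
  shows "FFf h m k = TFf (h + 1) (m - 1) (k - 1) + FFf (h - 1) m k"
proof -
  have p: "bi (m + h) j = bi (m + h - 1) (j - 1) + bi (m + h - 1) j" for j
    using bi_pascal[of "m + h - 1" j] assms by simp
  have e: "m - 1 + (h + 1) - 1 = m + h - 1" "m + (h - 1) = m + h - 1" "k - 1 - 1 = k - 2" "k - 1 + 1 = k" by simp_all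
  show ?thesis unfolding FFf_def TFf_def e p by (simp add: algebra_simps)
qed

lemma I2: assumes "h \<ge> 1" "m \<ge> 1"
  shows "TFf h m k = TFf (h + 1) (m - 1) k + FFf (h - 1) m k"
proof -
  have p: "bi m j = bi (m - 1) (j - 1) + bi (m - 1) j" for j
    using bi_pascal[of "m - 1" j] assms by simp
  have e: "m - 1 + (h + 1) - 1 = m + h - 1" "m + (h - 1) = m + h - 1" "k + 1 - 1 = k" by simp_all
  show ?thesis unfolding FFf_def TFf_def e p by (simp add: algebra_simps)
qed

lemma I3: assumes "h \<ge> 1" "m \<ge> 1"
  shows "TFf h m k = TTf (h + 1) (m - 1) (k - 1) + TFf (h - 1) m k"
proof -
  have p: "bi (m + h - 1) j = bi (m + h - 2) (j - 1) + bi (m + h - 2) j" for j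
    using bi_pascal[of "m + h - 2" j] assms by simp
  have e: "m - 1 + 1 = m" "m - 1 + (h + 1) - 2 = m + h - 2" "m + (h - 1) - 1 = m + h - 2"
     "k - 1 + 1 = k" "k - 1 + 2 = k + 1" "k - 1 - 1 = k - 2" by simp_all
  show ?thesis unfolding TTf_def TFf_def e p by (simp add: algebra_simps)
qed

lemma I4: assumes "h \<ge> 1" "m \<ge> 1"
  shows "TTf h m k = TTf (h + 1) (m - 1) k + TFf (h - 1) m k"
proof -
  have p: "bi (m + 1) j = bi m (j - 1) + bi m j" for j
    using bi_pascal[of m j] assms by simp
  have e: "m - 1 + 1 = m" "m - 1 + (h + 1) - 2 = m + h - 2" "m + (h - 1) - 1 = m + h - 2"
     "k + 1 - 1 = k" "k + 2 - 1 = k + 1" by simp_all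
  show ?thesis unfolding TTf_def TFf_def e p by (simp add: algebra_simps)
qed

lemma I5: assumes "m \<ge> 1"
  shows "FFf 0 m k = TFf 1 (m - 1) (k - 1)"
proof -
  have p: "bi m j = bi (m - 1) (j - 1) + bi (m - 1) j" for j
    using bi_pascal[of "m - 1" j] assms by simp
  have e: "m - 1 + 1 - 1 = m - 1" "k - 1 + 1 = k" "k - 1 - 1 = k - 2" "m + 0 = m" by simp_all
  show ?thesis unfolding FFf_def TFf_def e unfolding p by (simp add: algebra_simps)
qed

lemma I6: assumes "m \<ge> 1"
  shows "TFf 0 m k = TFf 1 (m - 1) k"
proof -
  have p: "bi m j = bi (m - 1) (j - 1) + bi (m - 1) j" for j
    using bi_pascal[of "m - 1" j] assms by simp
  have e: "m - 1 + 1 - 1 = m - 1" "m + 0 - 1 = m - 1" "k + 1 - 1 = k" by simp_all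
  show ?thesis unfolding TFf_def e p by (simp add: algebra_simps)
qed

lemma TF0: "h \<ge> 1 \<Longrightarrow> TFf h 0 k = (if k = 0 then 1 else 0)"
  unfolding TFf_def bi_def by (auto simp: binomial_eq_0)

lemma TT0: "h \<ge> 2 \<Longrightarrow> TTf h 0 k = (if k = 0 then 1 else 0)"
  unfolding TTf_def bi_def by (auto simp: binomial_eq_0)


definition ind :: "int \<Rightarrow> int" where "ind k = (if k = 0 then 1 else 0)"

definition ffG :: "nat \<Rightarrow> nat \<Rightarrow> int \<Rightarrow> int" where
  "ffG h m k = (if m = 0 then ind k else FFf (int h) (int m) k)"
definition tfG :: "nat \<Rightarrow> nat \<Rightarrow> int \<Rightarrow> int" where
  "tfG h m k = (if h = 0 \<and> m = 0 then ind k else TFf (int h) (int m) k)"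
definition ttG :: "nat \<Rightarrow> nat \<Rightarrow> int \<Rightarrow> int" where
  "ttG h m k = (if m = 0 then ind k else if h = 0 then (if m = 1 then ind k else TTf 1 (int m - 1) k)
      else TTf (int h) (int m) k)"
definition ftG :: "nat \<Rightarrow> nat \<Rightarrow> int \<Rightarrow> int" where
  "ftG h m k = (if h \<ge> 1 then tfG h m k else if m = 0 then ind k else ttG 1 (m - 1) (k - 1))"
definition G :: "nat \<Rightarrow> nat \<Rightarrow> bool \<Rightarrow> bool \<Rightarrow> int \<Rightarrow> int" where
  "G h m a b k = (if a then (if b then ttG h m k else tfG h m k) else (if b then ftG h m k else ffG h m k))"

lemma G_neg: "k < 0 \<Longrightarrow> G h m a b k = 0"
  unfolding G_def ttG_def tfG_def ftG_def ffG_def ind_def TTf_def TFf_def FFf_def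
  by (simp add: bi_neg)

lemma G_rec:
  assumes "h \<noteq> 0 \<or> m \<noteq> 0"
  shows "G h m a b k = (if m \<ge> 1 then G (h + 1) (m - 1) b True (if a then k else k - 1) else 0)
     + (if h \<ge> 1 then G (h - 1) m b False k else 0)"
proof (cases "m = 0")
  case True
  hence h: "h \<ge> 1" using assms by simp
  have l: "G h 0 a b k = ind k"
    using h TF0[of "int h" k] unfolding G_def ttG_def tfG_def ftG_def ffG_def ind_def by auto
  have r: "G (h - 1) 0 b False k = ind k"
    using TF0[of "int (h - 1)" k] unfolding G_def ttG_def tfG_def ftG_def ffG_def ind_def by auto
  show ?thesis using True h l r by simp
next
  case False
  then obtain p where mp: "m = Suc p" by (cases m) auto
  have im: "int m \<ge> 1" using mp by simp
  show ?thesis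
  proof (cases "h = 0")
    case True
    have e1: "int (Suc 0) = 1" "int (m - 1) = int m - 1" "int m - 1 + 1 = int m" using mp by auto
    show ?thesis
    proof (cases a; cases b)
      assume "a" "b"
      thus ?thesis using True mp unfolding G_def ttG_def by (simp add: ind_def)
    next
      assume "a" "\<not> b"
      thus ?thesis using True mp I6[OF im, of k] TF0[of 1 k]
        unfolding G_def tfG_def ftG_def ind_def by (cases p) (auto simp: e1)
    next
      assume "\<not> a" "b"
      thus ?thesis using True mp unfolding G_def ftG_def by simp
    next
      assume "\<not> a" "\<not> b"
      thus ?thesis using True mp I5[OF im, of k] TF0[of 1 "k - 1"]
        unfolding G_def tfG_def ftG_def ffG_def ind_def by (cases p) (auto simp: e1)
    qed
  next
    case False
    have ih: "int h \<ge> 1" using False by simp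
    have e1: "int (h + 1) = int h + 1" "int (m - 1) = int m - 1" "int (h - 1) = int h - 1"
      using mp False by auto
    have L1: "tfG (h - 1) m k = TFf (int h - 1) (int m) k" unfolding tfG_def using mp False by (simp add: of_nat_diff)
    have L2: "ffG (h - 1) m k = FFf (int h - 1) (int m) k" unfolding ffG_def using mp False by (simp add: of_nat_diff)
    have L3: "ttG h m k = TTf (int h) (int m) k" unfolding ttG_def using mp False by simp
    have L4: "tfG h m k = TFf (int h) (int m) k" unfolding tfG_def using mp False by simp
    have L5: "ffG h m k = FFf (int h) (int m) k" unfolding ffG_def using mp False by simp
    have L6: "ftG h m k = TFf (int h) (int m) k" unfolding ftG_def using L4 False by simp
    have tt: "ttG (h + 1) (m - 1) j = TTf (int h + 1) (int m - 1) j" for j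
      using TT0[of "int h + 1" j] mp ih unfolding ttG_def ind_def by (auto simp: e1 ac_simps)
    have ft: "ftG (h + 1) (m - 1) j = TFf (int h + 1) (int m - 1) j" for j
      unfolding ftG_def tfG_def using mp by (simp add: ac_simps)
    show ?thesis
    proof (cases a; cases b)
      assume "a" "b"
      show ?thesis using \<open>a\<close> \<open>b\<close> False mp I4[OF ih im, of k] tt[of k] L1 L3
        unfolding G_def by simp
    next
      assume "a" "\<not> b"
      show ?thesis using \<open>a\<close> \<open>\<not> b\<close> False mp I2[OF ih im, of k] ft[of k] L2 L4
        unfolding G_def by simp
    next
      assume "\<not> a" "b"
      show ?thesis using \<open>\<not> a\<close> \<open>b\<close> False mp I3[OF ih im, of k] tt[of "k - 1"] L1 L6
        unfolding G_def by simp
    next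
      assume "\<not> a" "\<not> b"
      show ?thesis using \<open>\<not> a\<close> \<open>\<not> b\<close> False mp I1[OF ih im, of k] ft[of "k - 1"] L2 L5
        unfolding G_def by simp
    qed
  qed
qed


definition S :: "nat \<Rightarrow> nat \<Rightarrow> bool \<Rightarrow> bool \<Rightarrow> nat \<Rightarrow> bool list set" where
  "S h m a b k = {w. ok h w \<and> length (filter id w) = m \<and> pat3 a b w = k}"

lemma S_finite: "finite (S h m a b k)"
proof (rule finite_subset)
  show "S h m a b k \<subseteq> {w. set w \<subseteq> (UNIV :: bool set) \<and> length w = 2 * m + h}"
    unfolding S_def using ok_len by auto
  show "finite {w. set w \<subseteq> (UNIV :: bool set) \<and> length w = 2 * m + h}"
    by (rule finite_lists_length_eq) simp
qed

lemma S_00: "S 0 0 a b k = (if k = 0 then {[]} else {})"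
proof -
  have "w \<in> S 0 0 a b k \<longleftrightarrow> w = [] \<and> k = 0" for w
  proof
    assume "w \<in> S 0 0 a b k"
    hence "ok 0 w" "length (filter id w) = 0" "pat3 a b w = k" unfolding S_def by auto
    hence "w = []" using ok_len[of 0 w] by simp
    thus "w = [] \<and> k = 0" using \<open>pat3 a b w = k\<close> by simp
  qed (simp add: S_def)
  thus ?thesis by auto
qed

lemma S_split:
  assumes "h \<noteq> 0 \<or> m \<noteq> 0"
  shows "S h m a b k = (#) True ` {xs. m \<ge> 1 \<and> ok (Suc h) xs \<and> length (filter id xs) = m - 1
              \<and> (if \<not> a then 1 else 0) + pat3 b True xs = k}
         \<union> (#) False ` {xs. h \<ge> 1 \<and> ok (h - 1) xs \<and> length (filter id xs) = m \<and> pat3 b False xs = k}"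
    (is "_ = ?A \<union> ?B")
proof
  show "S h m a b k \<subseteq> ?A \<union> ?B"
  proof
    fix w assume w: "w \<in> S h m a b k"
    show "w \<in> ?A \<union> ?B"
    proof (cases w)
      case Nil
      thus ?thesis using w assms unfolding S_def by auto
    next
      case (Cons x xs)
      show ?thesis
      proof (cases x)
        case True
        hence "xs \<in> {xs. m \<ge> 1 \<and> ok (Suc h) xs \<and> length (filter id xs) = m - 1
              \<and> (if \<not> a then 1 else 0) + pat3 b True xs = k}"
          using w Cons unfolding S_def by auto
        thus ?thesis using Cons True by blast
      next
        case False
        hence "xs \<in> {xs. h \<ge> 1 \<and> ok (h - 1) xs \<and> length (filter id xs) = m \<and> pat3 b False xs = k}"
          using w Cons unfolding S_def by auto
        thus ?thesis using Cons False by blast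
      qed
    qed
  qed
next
  show "?A \<union> ?B \<subseteq> S h m a b k"
    unfolding S_def by auto
qed

lemma card_S: "int (card (S h m a b k)) = G h m a b (int k)"
proof (induction "2 * m + h" arbitrary: h m a b k rule: less_induct)
  case less
  show ?case
  proof (cases "h = 0 \<and> m = 0")
    case True
    hence "h = 0" "m = 0" by auto
    thus ?thesis unfolding G_def ttG_def tfG_def ftG_def ffG_def ind_def by (simp add: S_00)
  next
    case False
    hence hm: "h \<noteq> 0 \<or> m \<noteq> 0" by simp
    define A where "A = {xs. m \<ge> 1 \<and> ok (Suc h) xs \<and> length (filter id xs) = m - 1
              \<and> (if \<not> a then 1 else 0) + pat3 b True xs = k}"
    define B where "B = {xs. h \<ge> 1 \<and> ok (h - 1) xs \<and> length (filter id xs) = m \<and> pat3 b False xs = k}"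
    have SS: "S h m a b k = (#) True ` A \<union> (#) False ` B" using S_split[OF hm] A_def B_def by simp
    have cA: "int (card A) = (if m \<ge> 1 then G (h + 1) (m - 1) b True (if a then int k else int k - 1) else 0)"
    proof (cases "m \<ge> 1")
      case False thus ?thesis unfolding A_def by simp
    next
      case m: True
      show ?thesis
      proof (cases "a \<or> k \<ge> 1")
        case True
        have "A = S (h + 1) (m - 1) b True (if a then k else k - 1)"
          unfolding A_def S_def using m True by auto
        moreover have "2 * (m - 1) + (h + 1) < 2 * m + h" using m by simp
        ultimately have "int (card A) = G (h + 1) (m - 1) b True (int (if a then k else k - 1))"
          using less by simp
        thus ?thesis using m True by (auto simp: of_nat_diff)
      next
        case False
        hence "A = {}" unfolding A_def by auto
        thus ?thesis using False m G_neg by simp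
      qed
    qed
    have cB: "int (card B) = (if h \<ge> 1 then G (h - 1) m b False (int k) else 0)"
    proof (cases "h \<ge> 1")
      case False thus ?thesis unfolding B_def by simp
    next
      case True
      have "B = S (h - 1) m b False k" unfolding B_def S_def using True by auto
      moreover have "2 * m + (h - 1) < 2 * m + h" using True by simp
      ultimately show ?thesis using less True by simp
    qed
    have fA: "finite A"
    proof -
      have "(#) True ` A \<subseteq> S h m a b k" using SS by blast
      hence "finite ((#) True ` A)" by (rule finite_subset[OF _ S_finite])
      thus ?thesis by (rule finite_imageD) (simp add: inj_on_def)
    qed
    have fB: "finite B"
    proof -
      have "(#) False ` B \<subseteq> S h m a b k" using SS by blast
      hence "finite ((#) False ` B)" by (rule finite_subset[OF _ S_finite])
      thus ?thesis by (rule finite_imageD) (simp add: inj_on_def)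
    qed
    have "card (S h m a b k) = card ((#) True ` A) + card ((#) False ` B)"
      unfolding SS by (rule card_Un_disjoint) (use fA fB in \<open>auto\<close>)
    also have "\<dots> = card A + card B" by (simp add: card_image inj_on_def)
    finally have "int (card (S h m a b k)) = int (card A) + int (card B)" by simp
    thus ?thesis using cA cB G_rec[OF hm, of a b "int k"] by simp
  qed
qed


lemma absorb2: "Suc k * (n choose Suc k) = (n - k) * (n choose k)"
  by (metis binomial_absorption binomial_absorb_comp)

lemma set_eq: assumes "n \<ge> 1"
  shows "{w. dyck n w \<and> long_interior_count w = k} = S 0 n True True k"
proof -
  have "dyck n w \<and> long_interior_count w = k \<longleftrightarrow> w \<in> S 0 n True True k" for w
  proof (cases "w = []")
    case True
    have "\<not> dyck n w" using True assms by (simp add: dyck_def)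
    moreover have "w \<notin> S 0 n True True k" using True assms by (simp add: S_def)
    ultimately show ?thesis by simp
  next
    case False
    have dy: "dyck n w = (ok 0 w \<and> length (filter id w) = n)" by (rule dyck_iff)
    have li: "ok 0 w \<Longrightarrow> long_interior_count w = pat3 True True w" using lic False by blast
    have "w \<in> S 0 n True True k = (ok 0 w \<and> length (filter id w) = n \<and> pat3 True True w = k)"
      unfolding S_def by simp
    thus ?thesis using dy li by metis
  qed
  thus ?thesis by auto
qed

lemma count_int: assumes "n \<ge> 2"
  shows "int (card {w. dyck n w \<and> long_interior_count w = k})
     = bi (int n) (int k + 1) * bi (int n - 2) (int k) - bi (int n) (int k + 2) * bi (int n - 2) (int k - 1)"
proof -
  have "int (card {w. dyck n w \<and> long_interior_count w = k}) = G 0 n True True (int k)"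
    using set_eq[of n k] assms card_S by simp
  also have "\<dots> = TTf 1 (int n - 1) (int k)" unfolding G_def ttG_def using assms by simp
  also have "\<dots> = bi (int n) (int k + 1) * bi (int n - 2) (int k) - bi (int n) (int k + 2) * bi (int n - 2) (int k - 1)"
    unfolding TTf_def by simp
  finally show ?thesis .
qed



lemma aux_fin:
  fixes A B K D1 D2 D3 :: real
  assumes "D1 \<noteq> 0" "D2 \<noteq> 0" "D3 \<noteq> 0" "K = D1 - 2"
  shows "A * B - D2 * A / D1 * (K * B / D2) = 2 / D3 * (D3 * A / D1) * B"
  unfolding assms(4) using assms(1-3) by (simp add: field_simps)

lemma final_ident: assumes "n \<ge> 2" "k \<le> n - 2"
  shows "real (n choose (k + 1)) * real ((n - 2) choose k)
        - real (n choose (k + 2)) * (if k = 0 then 0 else real ((n - 2) choose (k - 1)))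
     = 2 / real (n + 1) * real ((n + 1) choose (k + 2)) * real ((n - 2) choose k)"
proof -
  define A where "A = real (n choose (k + 1))"
  define B where "B = real ((n - 2) choose k)"
  have c1: "real ((n + 1) choose (k + 2)) = (real n + 1) * A / (real k + 2)"
  proof -
    have "Suc (Suc k) * (Suc n choose Suc (Suc k)) = Suc n * (n choose Suc k)"
      by (rule Suc_times_binomial)
    hence "real (Suc (Suc k) * (Suc n choose Suc (Suc k))) = real (Suc n * (n choose Suc k))"
      by (rule arg_cong)
    moreover have "k + 2 = Suc (Suc k)" "n + 1 = Suc n" "k + 1 = Suc k" by simp_all
    ultimately have "(real k + 2) * real ((n + 1) choose (k + 2)) = (real n + 1) * A"
      unfolding A_def by (simp add: algebra_simps del: binomial_Suc_Suc)
    thus ?thesis by (simp add: field_simps)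
  qed
  have c2: "real (n choose (k + 2)) = (real n - real k - 1) * A / (real k + 2)"
  proof -
    have "Suc (Suc k) * (n choose Suc (Suc k)) = (n - Suc k) * (n choose Suc k)"
      by (rule absorb2)
    hence "real (Suc (Suc k)) * real (n choose (k + 2)) = real (n - Suc k) * A"
      unfolding A_def by (metis Suc_eq_plus1 add_2_eq_Suc' of_nat_mult)
    moreover have "real (n - Suc k) = real n - real k - 1" using assms by (simp add: of_nat_diff)
    ultimately have "(real k + 2) * real (n choose (k + 2)) = (real n - real k - 1) * A" by (simp add: add.commute)
    thus ?thesis by (simp add: field_simps)
  qed
  show ?thesis
  proof (cases "k = 0")
    case True
    thus ?thesis unfolding c1 A_def[symmetric] B_def[symmetric] using assms by (simp add: field_simps)
  next
    case False
    then obtain j where kj: "k = Suc j" by (cases k) auto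
    have nz: "real n - real k - 1 \<noteq> 0" "real k + 2 \<noteq> 0" "real n + 1 \<noteq> 0" using assms by auto
    have c3: "real ((n - 2) choose (k - 1)) = real k * B / (real n - real k - 1)"
    proof -
      define Cc where "Cc = real ((n - 2) choose (k - 1))"
      have "Suc j * ((n - 2) choose Suc j) = ((n - 2) - j) * ((n - 2) choose j)"
        by (rule absorb2)
      hence "real k * B = real ((n - 2) - j) * Cc"
        unfolding B_def Cc_def kj by (metis diff_Suc_1 of_nat_mult)
      moreover have "real ((n - 2) - j) = real n - real k - 1" using assms kj by (simp add: of_nat_diff)
      ultimately have "Cc * (real n - real k - 1) = real k * B" by (simp add: mult.commute)
      thus ?thesis using nz(1) unfolding Cc_def[symmetric] by (simp add: eq_divide_eq)
    qed
    have "A * B - (real n - real k - 1) * A / (real k + 2) * (real k * B / (real n - real k - 1))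
       = 2 / (real n + 1) * ((real n + 1) * A / (real k + 2)) * B"
      by (rule aux_fin) (use nz in auto)
    thus ?thesis unfolding c1 c2 c3 A_def[symmetric] B_def[symmetric]
      by (simp only: False if_False of_nat_add of_nat_1)
  qed
qed


lemma cat_part: assumes "n \<ge> 2"
  shows "real (catalan n) = 2 / real (n + 1) * (\<Sum>k = 0..n - 2. real ((n + 1) choose (k + 2)) * real ((n - 2) choose k))"
proof -
  define C where "C = (2 * n) choose n"
  define C' where "C' = (2 * n) choose Suc n"
  have a: "Suc n * C' = n * C" using absorb2[of n "2 * n"] unfolding C_def C'_def by simp
  have "C = Suc n * (C - C')"
  proof -
    have "Suc n * (C - C') = Suc n * C - Suc n * C'" by (simp add: diff_mult_distrib2)
    also have "\<dots> = Suc n * C - n * C" using a by simp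
    also have "\<dots> = C" by (simp add: diff_mult_distrib[symmetric])
    finally show ?thesis by simp
  qed
  hence dv: "(n + 1) dvd C" by (metis Suc_eq_plus1 dvd_triv_left)
  have cat: "real (catalan n) = real C / real (n + 1)"
    unfolding catalan_def C_def[symmetric] using dv by (simp add: real_of_nat_div)
  define D where "D = (2 * n - 1) choose (n - 1)"
  have CD: "C = 2 * D"
  proof -
    have e1: "2 * n = Suc (2 * n - 1)" "n = Suc (n - 1)" using assms by auto
    have "Suc (2 * n - 1) choose Suc (n - 1) = ((2 * n - 1) choose (n - 1)) + ((2 * n - 1) choose Suc (n - 1))"
      by (rule binomial_Suc_Suc)
    hence "C = ((2 * n - 1) choose (n - 1)) + ((2 * n - 1) choose n)"
      unfolding C_def using e1 by metis
    moreover have "(2 * n - 1) choose n = (2 * n - 1) choose (n - 1)"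
      using binomial_symmetric[of n "2 * n - 1"] assms by (simp add: diff_diff_left)
    ultimately show ?thesis unfolding D_def by simp
  qed
  have V: "(\<Sum>k\<le>n - 1. ((n - 2) choose k) * ((n + 1) choose (n - 1 - k))) = D"
  proof -
    have eq: "n - 2 + (n + 1) = 2 * n - 1" using assms by simp
    show ?thesis using vandermonde[of "n - 2" "n + 1" "n - 1", unfolded eq] unfolding D_def .
  qed
  have S1: "(\<Sum>k\<le>n - 1. ((n - 2) choose k) * ((n + 1) choose (n - 1 - k)))
       = (\<Sum>k = 0..n - 2. ((n + 1) choose (k + 2)) * ((n - 2) choose k))"
  proof -
    have "{..n - 1} = insert (n - 1) {0..n - 2}" using assms by auto
    hence "(\<Sum>k\<le>n - 1. ((n - 2) choose k) * ((n + 1) choose (n - 1 - k)))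
        = ((n - 2) choose (n - 1)) * ((n + 1) choose 0) + (\<Sum>k = 0..n - 2. ((n - 2) choose k) * ((n + 1) choose (n - 1 - k)))"
      using assms by (simp add: sum.insert)
    also have "((n - 2) choose (n - 1)) = 0" using assms by (simp add: binomial_eq_0)
    also have "(\<Sum>k = 0..n - 2. ((n - 2) choose k) * ((n + 1) choose (n - 1 - k)))
       = (\<Sum>k = 0..n - 2. ((n + 1) choose (k + 2)) * ((n - 2) choose k))"
    proof (rule sum.cong)
      fix k assume "k \<in> {0..n - 2}"
      hence k: "k \<le> n - 2" by simp
      have "(n + 1) choose (k + 2) = (n + 1) choose (n + 1 - (k + 2))"
        using binomial_symmetric[of "k + 2" "n + 1"] k assms by simp
      also have "n + 1 - (k + 2) = n - 1 - k" by simp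
      finally show "((n - 2) choose k) * ((n + 1) choose (n - 1 - k)) = ((n + 1) choose (k + 2)) * ((n - 2) choose k)"
        by simp
    qed simp
    finally show ?thesis by simp
  qed
  have "(\<Sum>k = 0..n - 2. real ((n + 1) choose (k + 2)) * real ((n - 2) choose k)) = real D"
    using V S1 by (metis (no_types, lifting) of_nat_mult of_nat_sum sum.cong)
  thus ?thesis unfolding cat CD by simp
qed


lemma bi_conv: assumes "n \<ge> 2"
  shows "bi (int n) (int k + 1) = int (n choose (k + 1))"
    "bi (int n - 2) (int k) = int ((n - 2) choose k)"
    "bi (int n) (int k + 2) = int (n choose (k + 2))"
    "bi (int n - 2) (int k - 1) = (if k = 0 then 0 else int ((n - 2) choose (k - 1)))"
proof -
  have a: "nat (int n - 2) = n - 2" using assms by simp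
  show "bi (int n) (int k + 1) = int (n choose (k + 1))" unfolding bi_def by (simp add: nat_add_distrib)
  show "bi (int n - 2) (int k) = int ((n - 2) choose k)" unfolding bi_def a by simp
  show "bi (int n) (int k + 2) = int (n choose (k + 2))" unfolding bi_def by (simp add: nat_add_distrib)
  show "bi (int n - 2) (int k - 1) = (if k = 0 then 0 else int ((n - 2) choose (k - 1)))"
    unfolding bi_def a by (simp add: nat_diff_distrib)
qed

theorem mainTheorem1:
  fixes n :: nat
  assumes "n \<ge> 2"
  shows "(\<forall>k \<le> n - 2. real (card {w. dyck n w \<and> long_interior_count w = k})
            = 2 / real (n + 1) * real ((n + 1) choose (k + 2)) * real ((n - 2) choose k))
     \<and> real (catalan n)
            = 2 / real (n + 1) * (\<Sum>k = 0..n - 2. real ((n + 1) choose (k + 2)) * real ((n - 2) choose k))"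
proof
  show "\<forall>k \<le> n - 2. real (card {w. dyck n w \<and> long_interior_count w = k})
            = 2 / real (n + 1) * real ((n + 1) choose (k + 2)) * real ((n - 2) choose k)"
  proof (intro allI impI)
    fix k assume k: "k \<le> n - 2"
    have ieq: "int (card {w. dyck n w \<and> long_interior_count w = k})
       = int (n choose (k + 1)) * int ((n - 2) choose k)
         - int (n choose (k + 2)) * (if k = 0 then 0 else int ((n - 2) choose (k - 1)))"
      using count_int[OF assms, of k] bi_conv[OF assms, of k] by simp
    hence "real (card {w. dyck n w \<and> long_interior_count w = k})
       = real (n choose (k + 1)) * real ((n - 2) choose k)
         - real (n choose (k + 2)) * (if k = 0 then 0 else real ((n - 2) choose (k - 1)))"
    proof -
      have "real_of_int (int (card {w. dyck n w \<and> long_interior_count w = k}))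
       = real_of_int (int (n choose (k + 1)) * int ((n - 2) choose k)
         - int (n choose (k + 2)) * (if k = 0 then 0 else int ((n - 2) choose (k - 1))))"
        using ieq by (rule arg_cong)
      thus ?thesis by (cases "k = 0") simp_all
    qed
    thus "real (card {w. dyck n w \<and> long_interior_count w = k})
            = 2 / real (n + 1) * real ((n + 1) choose (k + 2)) * real ((n - 2) choose k)"
      using final_ident[OF assms k] by simp
  qed
next
  show "real (catalan n)
            = 2 / real (n + 1) * (\<Sum>k = 0..n - 2. real ((n + 1) choose (k + 2)) * real ((n - 2) choose k))"
    by (rule cat_part[OF assms])
qed

end
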